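(* Let $\Delta=6$ and $\delta=9789/10000$. Define $K^{(1)}_\delta=1$, $K^{(2)}_\delta=1069/1000$, $K^{(3)}_\delta=1160/1000$, $K^{(4)}_\delta=1225/1000$, and $K^{(w)}_\delta=(1/\delta)^{(w-1)(\Delta-1)}$ for $w\ge 5$. Then for every positive integer $w$ and all $t_1,\dots,t_w\in[0,1/2]$, \[\sum_{j=1}^{w}\frac{1}{\delta^{(j-1)(\Delta-1)}}\,h(t_j)\le w\,K^{(w)}_\delta\,h(t),\] where $t=(t_1\cdots t_w)^{1/w}$ is the geometric mean of the $t_j$.
   Context: $h(t)=(1-t)\left[\psi-\left(\frac{t}{1-t}\right)^{\chi}\right]$ for $t\in[0,1/2]$, with $\psi=13/10$ and $\chi=1/2$. *)

theory Defs
  imports Complex_Main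
begin

definition psi :: real where "psi = 13/10"
definition chi :: real where "chi = 1/2"

definition h :: "real \<Rightarrow> real" where
  "h t = (1 - t) * (psi - (t / (1 - t)) powr chi)"

definition Delta :: nat where "Delta = 6"
definition delta :: real where "delta = 9789/10000"

definition K :: "nat \<Rightarrow> real" where
  "K w = (if w = 1 then 1
          else if w = 2 then 1069/1000
          else if w = 3 then 1160/1000
          else if w = 4 then 1225/1000
          else (1 / delta) ^ ((w - 1) * (Delta - 1)))"

end

theory Submission imports Defs begin

definition tt :: "real \<Rightarrow> real" where "tt x = x^2/(1+x^2)"
definition ph :: "real \<Rightarrow> real" where "ph x = (13/10 - x)/(1+x^2)"
definition DD :: "real \<Rightarrow> real" where "DD x = x*(x^2 - 26/10*x - 1)/(2*(1+x^2))"
definition SS :: "real \<Rightarrow> real" where "SS x = ln (tt x)"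

lemma onepx: "1 + x^2 > (0::real)" by (simp add: add_pos_nonneg)
lemma onepx0: "1 + x^2 \<noteq> (0::real)" using onepx[of x] by linarith
lemma onepx': "1 + x*x \<noteq> (0::real)" using onepx[of x] by (simp add: power2_eq_square)
lemma onepx'': "2 + x*(x*2) \<noteq> (0::real)" using onepx[of x] by (simp add: power2_eq_square algebra_simps)

lemma SS_deriv: "x > 0 \<Longrightarrow> (SS has_real_derivative 2/(x*(1+x^2))) (at x)"
proof -
  assume x: "x > 0"
  have "((\<lambda>x. ln (x^2/(1+x^2))) has_real_derivative
        (1/(x^2/(1+x^2))) * ((2*x*(1+x^2) - x^2*(2*x))/(1+x^2)^2)) (at x)"
    using x onepx[of x] by (auto intro!: derivative_eq_intros simp: power2_eq_square)
  moreover have "(1/(x^2/(1+x^2))) * ((2*x*(1+x^2) - x^2*(2*x))/(1+x^2)^2) = 2/(x*(1+x^2))"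
  proof -
    have e: "2*x*(1+x^2) - x^2*(2*x) = 2*x" by algebra
    show ?thesis unfolding e using x onepx0[of x] by (simp add: divide_simps) algebra
  qed
  ultimately show ?thesis unfolding SS_def tt_def by simp
qed

lemma ph_deriv: "(ph has_real_derivative DD x * (2/(x*(1+x^2)))) (at x)" if "x > 0"
proof -
  have "((\<lambda>x. (13/10 - x)/(1+x^2)) has_real_derivative
        ((-1)*(1+x^2) - (13/10 - x)*(2*x))/(1+x^2)^2) (at x)"
    using onepx[of x] by (auto intro!: derivative_eq_intros simp: power2_eq_square)
  moreover have "((-1)*(1+x^2) - (13/10 - x)*(2*x))/(1+x^2)^2 = DD x * (2/(x*(1+x^2)))"
  proof -
    have e: "(-1)*(1+x^2) - (13/10 - x)*(2*x) = x^2 - 26/10*x - 1" by algebra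
    show ?thesis unfolding e DD_def using that onepx0[of x] by (simp add: divide_simps) algebra
  qed
  ultimately show ?thesis unfolding ph_def by simp
qed

lemma DD_deriv: "(DD has_real_derivative (x^4 + 4*x^2 - 52/10*x - 1)/(2*(1+x^2)^2)) (at x)"
proof -
  have "((\<lambda>x. x*(x^2 - 26/10*x - 1)/(2*(1+x^2))) has_real_derivative
        ((1*(x^2 - 26/10*x - 1) + x*(2*x - 26/10))*(2*(1+x^2)) - x*(x^2 - 26/10*x - 1)*(2*(2*x)))/(2*(1+x^2))^2) (at x)"
    using onepx[of x] by (auto intro!: derivative_eq_intros simp: power2_eq_square)
  moreover have "((1*(x^2 - 26/10*x - 1) + x*(2*x - 26/10))*(2*(1+x^2)) - x*(x^2 - 26/10*x - 1)*(2*(2*x)))/(2*(1+x^2))^2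
     = (x^4 + 4*x^2 - 52/10*x - 1)/(2*(1+x^2)^2)"
  proof -
    have e: "((1*(x^2 - 26/10*x - 1) + x*(2*x - 26/10))*(2*(1+x^2)) - x*(x^2 - 26/10*x - 1)*(2*(2*x))) = 2*(x^4 + 4*x^2 - 52/10*x - 1)" by algebra
    show ?thesis unfolding e using onepx0[of x] by (simp add: divide_simps) algebra
  qed
  ultimately show ?thesis unfolding DD_def by simp
qed

lemma DD_mono: assumes "0 \<le> a" "a \<le> b" "b \<le> 1" shows "DD b \<le> DD a"
proof (rule DERIV_nonpos_imp_nonincreasing[OF assms(2)])
  fix z assume z: "a \<le> z" "z \<le> b"
  have z01: "0 \<le> z" "z \<le> 1" using z assms by auto
  have zz: "z^2 \<le> z" using z01 by (simp add: power2_eq_square mult_left_le)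
  have "z^4 \<le> z^2" using z01 by (simp add: power_decreasing)
  with zz have "z^4 + 4*z^2 - 52/10*z - 1 \<le> 0" using z01 by linarith
  then have "(z^4 + 4*z^2 - 52/10*z - 1)/(2*(1+z^2)^2) \<le> 0"
    by (intro divide_nonpos_pos) (use onepx0[of z] in auto)
  then show "\<exists>y. DERIV DD z :> y \<and> y \<le> 0"
    using DD_deriv[of z] by blast
qed

lemma Sp_pos: "z > 0 \<Longrightarrow> 2/(z*(1+z^2)) > (0::real)"
  using onepx[of z] by simp

lemma F_deriv: "z > 0 \<Longrightarrow> ((\<lambda>z. A * ph z - B * SS z) has_real_derivative (A * DD z - B) * (2/(z*(1+z^2)))) (at z)"
proof -
  assume z: "z > 0"
  have "((\<lambda>z. A * ph z - B * SS z) has_real_derivative A * (DD z * (2/(z*(1+z^2)))) - B * (2/(z*(1+z^2)))) (at z)"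
    using ph_deriv[OF z] SS_deriv[OF z] by (intro derivative_intros DERIV_cmult) auto
  moreover have "A * (DD z * (2/(z*(1+z^2)))) - B * (2/(z*(1+z^2))) = (A * DD z - B) * (2/(z*(1+z^2)))" by (simp only: left_diff_distrib mult.assoc)
  ultimately show ?thesis by (simp only:)
qed

lemma tangent:
  assumes x: "0 < x" "x \<le> 1" and xi: "0 < \<xi>" "\<xi> \<le> 1"
  shows "ph x \<le> ph \<xi> + DD \<xi> * (SS x - SS \<xi>)"
proof -
  define F where "F = (\<lambda>z. 1 * ph z - DD \<xi> * SS z)"
  have dF: "z > 0 \<Longrightarrow> (F has_real_derivative (1 * DD z - DD \<xi>) * (2/(z*(1+z^2)))) (at z)" for z
    unfolding F_def by (rule F_deriv)
  have "F x \<le> F \<xi>"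
  proof (cases "x \<le> \<xi>")
    case True
    show ?thesis
    proof (rule DERIV_nonneg_imp_nondecreasing[OF True])
      fix z assume z: "x \<le> z" "z \<le> \<xi>"
      have "DD \<xi> \<le> DD z" using z x xi by (intro DD_mono) auto
      then have "(1 * DD z - DD \<xi>) * (2/(z*(1+z^2))) \<ge> 0"
        using Sp_pos[of z] z x by (intro mult_nonneg_nonneg) auto
      then show "\<exists>y. DERIV F z :> y \<and> y \<ge> 0" using dF[of z] z x by auto
    qed
  next
    case False
    show ?thesis
    proof (rule DERIV_nonpos_imp_nonincreasing[of \<xi> x])
      show "\<xi> \<le> x" using False by simp
    next
      fix z assume z: "\<xi> \<le> z" "z \<le> x"
      have "DD z \<le> DD \<xi>" using z x xi by (intro DD_mono) auto
      then have "(1 * DD z - DD \<xi>) * (2/(z*(1+z^2))) \<le> 0"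
        using Sp_pos[of z] z xi by (intro mult_nonpos_nonneg) auto
      then show "\<exists>y. DERIV F z :> y \<and> y \<le> 0" using dF[of z] z xi by auto
    qed
  qed
  then show ?thesis unfolding F_def by (simp add: algebra_simps)
qed

lemma unimodal:
  assumes A: "A \<ge> 0" and y: "0 < ya" "ya \<le> y" "y \<le> yb" "yb \<le> 1"
  shows "min (A * ph ya - B * SS ya) (A * ph yb - B * SS yb) \<le> A * ph y - B * SS y"
proof -
  define F where "F = (\<lambda>z. A * ph z - B * SS z)"
  have dF: "z > 0 \<Longrightarrow> (F has_real_derivative (A * DD z - B) * (2/(z*(1+z^2)))) (at z)" for z
    unfolding F_def by (rule F_deriv)
  show ?thesis
  proof (cases "A * DD y - B \<ge> 0")
    case True
    have "F ya \<le> F y"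
    proof (rule DERIV_nonneg_imp_nondecreasing[OF y(2)])
      fix z assume z: "ya \<le> z" "z \<le> y"
      have "DD y \<le> DD z" using z y by (intro DD_mono) auto
      then have "A * DD y \<le> A * DD z" using A by (simp add: mult_left_mono)
      then have "(A * DD z - B) * (2/(z*(1+z^2))) \<ge> 0"
        using Sp_pos[of z] z y True by (intro mult_nonneg_nonneg) auto
      then show "\<exists>y. DERIV F z :> y \<and> y \<ge> 0" using dF[of z] z y by auto
    qed
    then show ?thesis unfolding F_def by linarith
  next
    case False
    have "F yb \<le> F y"
    proof (rule DERIV_nonpos_imp_nonincreasing[OF y(3)])
      fix z assume z: "y \<le> z" "z \<le> yb"
      have "DD z \<le> DD y" using z y by (intro DD_mono) auto
      then have "A * DD z \<le> A * DD y" using A by (simp add: mult_left_mono)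
      then have "(A * DD z - B) * (2/(z*(1+z^2))) \<le> 0"
        using Sp_pos[of z] z y False by (intro mult_nonpos_nonneg) auto
      then show "\<exists>y. DERIV F z :> y \<and> y \<le> 0" using dF[of z] z y by auto
    qed
    then show ?thesis unfolding F_def by linarith
  qed
qed

lemma tt_pos: "x > 0 \<Longrightarrow> tt x > 0" unfolding tt_def using onepx[of x] by simp
lemma tt_le_half: "0 \<le> x \<Longrightarrow> x \<le> 1 \<Longrightarrow> tt x \<le> 1/2"
  unfolding tt_def using onepx[of x]
  by (simp add: divide_simps power2_eq_square) (smt (verit) mult_le_one)

lemma ln_lower: "r > 0 \<Longrightarrow> 1 - 1/r \<le> ln (r::real)"
  using ln_le_minus_one[of "1/r"] by (simp add: ln_div)

definition lnlo :: "real \<Rightarrow> real" where "lnlo r = (if 1 \<le> r then 2*(r-1)/(r+1) else (r - 1/r)/2)"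
definition lnhi :: "real \<Rightarrow> real" where "lnhi r = (r - 1/r)/2"

lemma lnhi_ok: assumes "1 \<le> r" shows "ln r \<le> lnhi r"
proof -
  have "(\<lambda>r. ln r - (r - 1/r)/2) r \<le> (\<lambda>r. ln r - (r - 1/r)/2) 1"
  proof (rule DERIV_nonpos_imp_nonincreasing[OF assms])
    fix z :: real assume z: "1 \<le> z" "z \<le> r"
    have d: "((\<lambda>r. ln r - (r - 1/r)/2) has_real_derivative 1/z - (1 + 1/z^2)/2) (at z)"
      using z by (auto intro!: derivative_eq_intros simp: power2_eq_square field_simps)
    have "1/z - (1 + 1/z^2)/2 = - ((z-1)^2/(2*z^2))" using z by (simp add: field_simps power2_eq_square)
    also have "\<dots> \<le> 0" using z by simp
    finally show "\<exists>y. ((\<lambda>r. ln r - (r - 1/r)/2) has_real_derivative y) (at z) \<and> y \<le> 0" using d by blast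
  qed
  then show ?thesis unfolding lnhi_def by simp
qed

lemma lnlo_ok: assumes "0 < r" shows "lnlo r \<le> ln r"
proof (cases "1 \<le> r")
  case True
  have "(\<lambda>r. ln r - 2*(r-1)/(r+1)) 1 \<le> (\<lambda>r. ln r - 2*(r-1)/(r+1)) r"
  proof (rule DERIV_nonneg_imp_nondecreasing[OF True])
    fix z :: real assume z: "1 \<le> z" "z \<le> r"
    have d: "((\<lambda>r. ln r - 2*(r-1)/(r+1)) has_real_derivative 1/z - (2*(z+1) - 2*(z-1))/(z+1)^2) (at z)"
      using z by (auto intro!: derivative_eq_intros simp: power2_eq_square)
    have "1/z - (2*(z+1) - 2*(z-1))/(z+1)^2 = (z-1)^2/(z*(z+1)^2)"
    proof -
      have "z \<noteq> 0" "z + 1 \<noteq> 0" using z by auto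
      then show ?thesis by (simp add: divide_simps) algebra
    qed
    also have "\<dots> \<ge> 0" using z by simp
    finally show "\<exists>y. ((\<lambda>r. ln r - 2*(r-1)/(r+1)) has_real_derivative y) (at z) \<and> y \<ge> 0" using d by blast
  qed
  then show ?thesis using True unfolding lnlo_def by simp
next
  case False
  have "ln (1/r) \<le> lnhi (1/r)" using False assms by (intro lnhi_ok) (simp add: field_simps)
  then show ?thesis using False assms unfolding lnlo_def lnhi_def by (simp add: ln_div field_simps)
qed

lemma interval_ok:
  fixes I :: "nat set" and c \<xi> x :: "nat \<Rightarrow> real" and w :: nat
  assumes fin: "finite I" and cardI: "card I = w"
  and c: "\<forall>j\<in>I. 0 \<le> c j"
  and xi: "\<forall>j\<in>I. 0 < \<xi> j \<and> \<xi> j \<le> 1"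
  and kap: "\<forall>j\<in>I. \<mu> \<le> c j * DD (\<xi> j)"
  and mu: "\<mu> \<le> 0"
  and x: "\<forall>j\<in>I. 0 < x j \<and> x j \<le> 1"
  and y: "0 < ya" "ya \<le> y" "y \<le> yb" "yb \<le> 1"
  and sumS: "(\<Sum>j\<in>I. SS (x j)) = real w * SS y"
  and Kw: "Kw \<ge> 0"
  and eq: "(\<Sum>j\<in>I. c j * ph (\<xi> j) + (c j * DD (\<xi> j) - \<mu>) * lnhi (1/(2*tt (\<xi> j)))) \<le> q"
  and ea: "q \<le> real w*Kw*ph ya + (-\<mu>) * lnlo (tt ya ^ w / (\<Prod>j\<in>I. tt (\<xi> j)))"
  and eb: "q \<le> real w*Kw*ph yb + (-\<mu>) * lnlo (tt yb ^ w / (\<Prod>j\<in>I. tt (\<xi> j)))"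
  shows "(\<Sum>j\<in>I. c j * ph (x j)) \<le> real w*Kw*ph y"
proof -
  define B where "B j = c j * ph (\<xi> j) - \<mu> * SS (\<xi> j) + (c j * DD (\<xi> j) - \<mu>) * lnhi (1/(2*tt (\<xi> j)))" for j
  have Bj: "c j * ph (x j) - \<mu> * SS (x j) \<le> B j" if j: "j \<in> I" for j
  proof -
    have xj: "0 < x j" "x j \<le> 1" and xij: "0 < \<xi> j" "\<xi> j \<le> 1" using x xi j by auto
    have t1: "c j * ph (x j) \<le> c j * (ph (\<xi> j) + DD (\<xi> j) * (SS (x j) - SS (\<xi> j)))"
      using tangent[OF xj xij] c j by (simp add: mult_left_mono)
    have "SS (x j) \<le> ln (1/2)" unfolding SS_def
      using tt_pos[OF xj(1)] tt_le_half[of "x j"] xj by simp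
    then have "SS (x j) - SS (\<xi> j) \<le> ln (1/(2*tt (\<xi> j)))"
      unfolding SS_def using tt_pos[OF xij(1)] by (simp add: ln_div ln_mult)
    also have "\<dots> \<le> lnhi (1/(2*tt (\<xi> j)))"
      using tt_pos[OF xij(1)] tt_le_half[of "\<xi> j"] xij by (intro lnhi_ok) (simp add: field_simps)
    finally have t2: "(c j * DD (\<xi> j) - \<mu>) * (SS (x j) - SS (\<xi> j)) \<le> (c j * DD (\<xi> j) - \<mu>) * lnhi (1/(2*tt (\<xi> j)))"
      using kap j by (intro mult_left_mono) auto
    have "c j * ph (x j) - \<mu> * SS (x j) \<le> c j * (ph (\<xi> j) + DD (\<xi> j) * (SS (x j) - SS (\<xi> j))) - \<mu> * SS (x j)"
      using t1 by simp
    also have "\<dots> = c j * ph (\<xi> j) - \<mu> * SS (\<xi> j) + (c j * DD (\<xi> j) - \<mu>) * (SS (x j) - SS (\<xi> j))"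
      by (simp add: algebra_simps)
    finally show ?thesis using t2 unfolding B_def by simp
  qed
  have "(\<Sum>j\<in>I. c j * ph (x j) - \<mu> * SS (x j)) \<le> (\<Sum>j\<in>I. B j)"
    using Bj by (intro sum_mono) auto
  then have S1: "(\<Sum>j\<in>I. c j * ph (x j)) \<le> (\<Sum>j\<in>I. B j) + \<mu> * (real w * SS y)"
    using sumS by (simp add: sum_subtractf sum_distrib_left[symmetric])
  define E where "E = (\<Sum>j\<in>I. c j * ph (\<xi> j) + (c j * DD (\<xi> j) - \<mu>) * lnhi (1/(2*tt (\<xi> j))))"
  have SB: "(\<Sum>j\<in>I. B j) = E - \<mu> * (\<Sum>j\<in>I. SS (\<xi> j))"
    unfolding B_def E_def by (simp add: sum.distrib sum_subtractf sum_distrib_left algebra_simps)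
  have endp: "E - \<mu> * (\<Sum>j\<in>I. SS (\<xi> j)) \<le> real w*Kw*ph e - (\<mu>*real w) * SS e"
    if e: "0 < e" and ee: "E \<le> real w*Kw*ph e + (-\<mu>) * lnlo (tt e ^ w / (\<Prod>j\<in>I. tt (\<xi> j)))" for e
  proof -
    have pp: "(\<Prod>j\<in>I. tt (\<xi> j)) > 0" using xi tt_pos by (intro prod_pos) auto
    have te: "tt e ^ w > 0" using tt_pos[OF e] by simp
    have "ln (tt e ^ w / (\<Prod>j\<in>I. tt (\<xi> j))) = real w * SS e - (\<Sum>j\<in>I. SS (\<xi> j))"
      unfolding SS_def using pp te tt_pos[OF e] xi tt_pos
      by (simp add: ln_div ln_realpow ln_prod[OF fin] less_imp_neq[symmetric])
    moreover have "lnlo (tt e ^ w / (\<Prod>j\<in>I. tt (\<xi> j))) \<le> ln (tt e ^ w / (\<Prod>j\<in>I. tt (\<xi> j)))"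
      using pp te by (intro lnlo_ok) simp
    ultimately have "(-\<mu>) * lnlo (tt e ^ w / (\<Prod>j\<in>I. tt (\<xi> j))) \<le> (-\<mu>) * (real w * SS e - (\<Sum>j\<in>I. SS (\<xi> j)))"
      using mu by (intro mult_left_mono) auto
    then show ?thesis using ee by (simp add: algebra_simps)
  qed
  have "min (real w*Kw * ph ya - (\<mu>*real w) * SS ya) (real w*Kw * ph yb - (\<mu>*real w) * SS yb) \<le> real w*Kw * ph y - (\<mu>*real w) * SS y"
    using Kw y by (intro unimodal) auto
  moreover have "E - \<mu> * (\<Sum>j\<in>I. SS (\<xi> j)) \<le> min (real w*Kw * ph ya - (\<mu>*real w) * SS ya) (real w*Kw * ph yb - (\<mu>*real w) * SS yb)"
    using endp[of ya] endp[of yb] ea eb eq y unfolding E_def by auto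
  ultimately have "E - \<mu> * (\<Sum>j\<in>I. SS (\<xi> j)) \<le> real w*Kw * ph y - (\<mu>*real w) * SS y"
    by (rule order_trans[rotated])
  then show ?thesis using S1 SB by (simp add: algebra_simps)
qed


lemma ph_nonneg: "x \<le> 1 \<Longrightarrow> 0 \<le> ph x"
  unfolding ph_def using onepx[of x] by simp

lemma ph_le: "0 \<le> x \<Longrightarrow> ph x \<le> 13/10"
  unfolding ph_def using onepx[of x] by (simp add: divide_simps) (smt (verit) zero_le_power2)

lemma ph_mono: assumes "0 \<le> a" "a \<le> b" "b \<le> 1" shows "ph b \<le> ph a"
proof -
  have ab: "a * b \<le> 1" using assms by (smt (verit) mult_le_one)
  have "(13/10 - b) * (1 + a^2) \<le> (13/10 - a) * (1 + b^2)"
  proof -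
    have "(13/10 - a) * (1 + b^2) - (13/10 - b) * (1 + a^2) = (b - a) * (13/10*(a+b) + 1 - a*b)"
      by algebra
    also have "\<dots> \<ge> 0"
    proof (intro mult_nonneg_nonneg)
      show "0 \<le> b - a" using assms by simp
      have "0 \<le> 13/10*(a+b)" using assms by simp
      then show "0 \<le> 13/10*(a+b) + 1 - a*b" using ab by linarith
    qed
    finally show ?thesis by simp
  qed
  then have "(13/10 - b) * (1 + a^2) / ((1 + a^2)*(1 + b^2)) \<le> (13/10 - a) * (1 + b^2) / ((1 + a^2)*(1 + b^2))"
    using onepx[of a] onepx[of b] by (intro divide_right_mono) auto
  then show ?thesis unfolding ph_def using onepx0[of a] onepx0[of b] by simp
qed

lemma triv:
  fixes I :: "nat set" and c x :: "nat \<Rightarrow> real" and w :: nat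
  assumes fin: "finite I" and c: "\<forall>j\<in>I. 0 \<le> c j"
  and x: "\<forall>j\<in>I. 0 \<le> x j \<and> x j \<le> 1"
  and y: "0 \<le> y" "y \<le> yt" "yt \<le> 1" and Kw: "Kw \<ge> 0"
  and bound: "13/10 * (\<Sum>j\<in>I. c j) \<le> real w * Kw * ph yt"
  shows "(\<Sum>j\<in>I. c j * ph (x j)) \<le> real w * Kw * ph y"
proof -
  have "(\<Sum>j\<in>I. c j * ph (x j)) \<le> (\<Sum>j\<in>I. c j * (13/10))"
    using c x ph_le by (intro sum_mono mult_left_mono) auto
  also have "\<dots> = (\<Sum>j\<in>I. c j) * (13/10)" by (rule sum_distrib_right[symmetric])
  also have "\<dots> = 13/10 * (\<Sum>j\<in>I. c j)" by simp
  also have "\<dots> \<le> real w * Kw * ph yt" by (rule bound)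
  also have "\<dots> \<le> real w * Kw * ph y" using ph_mono[of y yt] y Kw by (intro mult_left_mono) auto
  finally show ?thesis .
qed

lemma set12: "{1..2::nat} = {1,2}" by auto
lemma set13: "{1..3::nat} = {1,2,3}" by auto
lemma set14: "{1..4::nat} = {1,2,3,4}" by auto
lemma set12': "{Suc 0..2::nat} = {1,2}" by auto
lemma set13': "{Suc 0..3::nat} = {1,2,3}" by auto
lemma set14': "{Suc 0..4::nat} = {1,2,3,4}" by auto
lemmas ivl_simps = set12' set13' set14' set12 set13 set14 ph_def tt_def DD_def delta_def Delta_def K_def power_divide lnlo_def lnhi_def

definition Cf2 :: "nat \<Rightarrow> real" where "Cf2 = (\<lambda>j. (if j = 1 then (1) else (if j = 2 then (291641/262144) else 1)))"

lemma Cf2_ge: "\<forall>j\<in>{1..2::nat}. 1 / delta ^ ((j - 1) * (Delta - 1)) \<le> Cf2 j"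
  by (simp add: ivl_simps Cf2_def)

lemma iv2_0:
  assumes "\<forall>j\<in>{1..2::nat}. 0 < x j \<and> x j \<le> 1" "(15/1024) \<le> y" "y \<le> (33/1024)"
    "(\<Sum>j\<in>{1..2::nat}. SS (x j)) = real 2 * SS y"
  shows "(\<Sum>j\<in>{1..2::nat}. Cf2 j * ph (x j)) \<le> real 2 * K 2 * ph y"
  by (rule interval_ok[where \<xi> = "\<lambda>j. (if j = 1 then (101/4096) else (if j = 2 then (365/16384) else 1))" and \<mu> = "(-(109925/8388608))" and q = "(2897718947/1073741824)" and ya = "(15/1024)" and yb = "(33/1024)"])
    (use assms in \<open>simp_all add: ivl_simps Cf2_def\<close>)

lemma iv2_1:
  assumes "\<forall>j\<in>{1..2::nat}. 0 < x j \<and> x j \<le> 1" "(33/1024) \<le> y" "y \<le> (65/1024)"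
    "(\<Sum>j\<in>{1..2::nat}. SS (x j)) = real 2 * SS y"
  shows "(\<Sum>j\<in>{1..2::nat}. Cf2 j * ph (x j)) \<le> real 2 * K 2 * ph y"
  by (rule interval_ok[where \<xi> = "\<lambda>j. (if j = 1 then (823/16384) else (if j = 2 then (747/16384) else 1))" and \<mu> = "(-(237075/8388608))" and q = "(2834533553/1073741824)" and ya = "(33/1024)" and yb = "(65/1024)"])
    (use assms in \<open>simp_all add: ivl_simps Cf2_def\<close>)

lemma iv2_2:
  assumes "\<forall>j\<in>{1..2::nat}. 0 < x j \<and> x j \<le> 1" "(65/1024) \<le> y" "y \<le> (113/1024)"
    "(\<Sum>j\<in>{1..2::nat}. SS (x j)) = real 2 * SS y"
  shows "(\<Sum>j\<in>{1..2::nat}. Cf2 j * ph (x j)) \<le> real 2 * K 2 * ph y"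
  by (rule interval_ok[where \<xi> = "\<lambda>j. (if j = 1 then (1491/16384) else (if j = 2 then (85/1024) else 1))" and \<mu> = "(-(930115/16777216))" and q = "(1365774441/536870912)" and ya = "(65/1024)" and yb = "(113/1024)"])
    (use assms in \<open>simp_all add: ivl_simps Cf2_def\<close>)

lemma iv2_3:
  assumes "\<forall>j\<in>{1..2::nat}. 0 < x j \<and> x j \<le> 1" "(113/1024) \<le> y" "y \<le> (11/64)"
    "(\<Sum>j\<in>{1..2::nat}. SS (x j)) = real 2 * SS y"
  shows "(\<Sum>j\<in>{1..2::nat}. Cf2 j * ph (x j)) \<le> real 2 * K 2 * ph y"
  by (rule interval_ok[where \<xi> = "\<lambda>j. (if j = 1 then (2417/16384) else (if j = 2 then (553/4096) else 1))" and \<mu> = "(-(1649333/16777216))" and q = "(80560413/33554432)" and ya = "(113/1024)" and yb = "(11/64)"])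
    (use assms in \<open>simp_all add: ivl_simps Cf2_def\<close>)

lemma iv2_4:
  assumes "\<forall>j\<in>{1..2::nat}. 0 < x j \<and> x j \<le> 1" "(11/64) \<le> y" "y \<le> (127/512)"
    "(\<Sum>j\<in>{1..2::nat}. SS (x j)) = real 2 * SS y"
  shows "(\<Sum>j\<in>{1..2::nat}. Cf2 j * ph (x j)) \<le> real 2 * K 2 * ph y"
  by (rule interval_ok[where \<xi> = "\<lambda>j. (if j = 1 then (1797/8192) else (if j = 2 then (3293/16384) else 1))" and \<mu> = "(-(2672479/16777216))" and q = "(37016079/16777216)" and ya = "(11/64)" and yb = "(127/512)"])
    (use assms in \<open>simp_all add: ivl_simps Cf2_def\<close>)

lemma iv2_5:
  assumes "\<forall>j\<in>{1..2::nat}. 0 < x j \<and> x j \<le> 1" "(127/512) \<le> y" "y \<le> (347/1024)"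
    "(\<Sum>j\<in>{1..2::nat}. SS (x j)) = real 2 * SS y"
  shows "(\<Sum>j\<in>{1..2::nat}. Cf2 j * ph (x j)) \<le> real 2 * K 2 * ph y"
  by (rule interval_ok[where \<xi> = "\<lambda>j. (if j = 1 then (1257/4096) else (if j = 2 then (4599/16384) else 1))" and \<mu> = "(-(4009209/16777216))" and q = "(2103387895/1073741824)" and ya = "(127/512)" and yb = "(347/1024)"])
    (use assms in \<open>simp_all add: ivl_simps Cf2_def\<close>)

lemma iv2_6:
  assumes "\<forall>j\<in>{1..2::nat}. 0 < x j \<and> x j \<le> 1" "(347/1024) \<le> y" "y \<le> (227/512)"
    "(\<Sum>j\<in>{1..2::nat}. SS (x j)) = real 2 * SS y"
  shows "(\<Sum>j\<in>{1..2::nat}. Cf2 j * ph (x j)) \<le> real 2 * K 2 * ph y"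
  by (rule interval_ok[where \<xi> = "\<lambda>j. (if j = 1 then (1681/4096) else (if j = 2 then (6111/16384) else 1))" and \<mu> = "(-(2797061/8388608))" and q = "(223706457/134217728)" and ya = "(347/1024)" and yb = "(227/512)"])
    (use assms in \<open>simp_all add: ivl_simps Cf2_def\<close>)

lemma iv2_7:
  assumes "\<forall>j\<in>{1..2::nat}. 0 < x j \<and> x j \<le> 1" "(227/512) \<le> y" "y \<le> (577/1024)"
    "(\<Sum>j\<in>{1..2::nat}. SS (x j)) = real 2 * SS y"
  shows "(\<Sum>j\<in>{1..2::nat}. Cf2 j * ph (x j)) \<le> real 2 * K 2 * ph y"
  by (rule interval_ok[where \<xi> = "\<lambda>j. (if j = 1 then (1089/2048) else (if j = 2 then (3909/8192) else 1))" and \<mu> = "(-(7301631/16777216))" and q = "(11278971/8388608)" and ya = "(227/512)" and yb = "(577/1024)"])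
    (use assms in \<open>simp_all add: ivl_simps Cf2_def\<close>)

lemma iv2_8:
  assumes "\<forall>j\<in>{1..2::nat}. 0 < x j \<and> x j \<le> 1" "(577/1024) \<le> y" "y \<le> (717/1024)"
    "(\<Sum>j\<in>{1..2::nat}. SS (x j)) = real 2 * SS y"
  shows "(\<Sum>j\<in>{1..2::nat}. Cf2 j * ph (x j)) \<le> real 2 * K 2 * ph y"
  by (rule interval_ok[where \<xi> = "\<lambda>j. (if j = 1 then (2769/4096) else (if j = 2 then (2425/4096) else 1))" and \<mu> = "(-(139919/262144))" and q = "(543026911/536870912)" and ya = "(577/1024)" and yb = "(717/1024)"])
    (use assms in \<open>simp_all add: ivl_simps Cf2_def\<close>)

lemma iv2_9:
  assumes "\<forall>j\<in>{1..2::nat}. 0 < x j \<and> x j \<le> 1" "(717/1024) \<le> y" "y \<le> (211/256)"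
    "(\<Sum>j\<in>{1..2::nat}. SS (x j)) = real 2 * SS y"
  shows "(\<Sum>j\<in>{1..2::nat}. Cf2 j * ph (x j)) \<le> real 2 * K 2 * ph y"
  by (rule interval_ok[where \<xi> = "\<lambda>j. (if j = 1 then (13685/16384) else (if j = 2 then (11461/16384) else 1))" and \<mu> = "(-(10210929/16777216))" and q = "(96945973/134217728)" and ya = "(717/1024)" and yb = "(211/256)"])
    (use assms in \<open>simp_all add: ivl_simps Cf2_def\<close>)

lemma iv2_10:
  assumes "\<forall>j\<in>{1..2::nat}. 0 < x j \<and> x j \<le> 1" "(211/256) \<le> y" "y \<le> (457/512)"
    "(\<Sum>j\<in>{1..2::nat}. SS (x j)) = real 2 * SS y"
  shows "(\<Sum>j\<in>{1..2::nat}. Cf2 j * ph (x j)) \<le> real 2 * K 2 * ph y"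
  by (rule interval_ok[where \<xi> = "\<lambda>j. (if j = 1 then (7979/8192) else (if j = 2 then (3137/4096) else 1))" and \<mu> = "(-(10833269/16777216))" and q = "(36362023/67108864)" and ya = "(211/256)" and yb = "(457/512)"])
    (use assms in \<open>simp_all add: ivl_simps Cf2_def\<close>)

lemma iv2_11:
  assumes "\<forall>j\<in>{1..2::nat}. 0 < x j \<and> x j \<le> 1" "(457/512) \<le> y" "y \<le> (243/256)"
    "(\<Sum>j\<in>{1..2::nat}. SS (x j)) = real 2 * SS y"
  shows "(\<Sum>j\<in>{1..2::nat}. Cf2 j * ph (x j)) \<le> real 2 * K 2 * ph y"
  by (rule interval_ok[where \<xi> = "\<lambda>j. (if j = 1 then (1) else (if j = 2 then (13975/16384) else 1))" and \<mu> = "(-(11474317/16777216))" and q = "(117543659/268435456)" and ya = "(457/512)" and yb = "(243/256)"])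
    (use assms in \<open>simp_all add: ivl_simps Cf2_def\<close>)

lemma iv2_12:
  assumes "\<forall>j\<in>{1..2::nat}. 0 < x j \<and> x j \<le> 1" "(243/256) \<le> y" "y \<le> (1)"
    "(\<Sum>j\<in>{1..2::nat}. SS (x j)) = real 2 * SS y"
  shows "(\<Sum>j\<in>{1..2::nat}. Cf2 j * ph (x j)) \<le> real 2 * K 2 * ph y"
  by (rule interval_ok[where \<xi> = "\<lambda>j. (if j = 1 then (1) else (if j = 2 then (3893/4096) else 1))" and \<mu> = "(-(11966585/16777216))" and q = "(380450691/1073741824)" and ya = "(243/256)" and yb = "(1)"])
    (use assms in \<open>simp_all add: ivl_simps Cf2_def\<close>)

lemma main2:
  fixes x :: "nat \<Rightarrow> real"
  assumes x: "\<forall>j\<in>{1..2::nat}. 0 \<le> x j \<and> x j \<le> 1" and y: "0 \<le> y" "y \<le> 1"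
    and H: "0 < y \<Longrightarrow> (\<forall>j\<in>{1..2::nat}. 0 < x j) \<and> (\<Sum>j\<in>{1..2::nat}. SS (x j)) = real 2 * SS y"
  shows "(\<Sum>j\<in>{1..2::nat}. Cf2 j * ph (x j)) \<le> real 2 * K 2 * ph y"
proof (cases "y \<le> (15/1024)")
  case True
  show ?thesis by (rule triv[where yt="(15/1024)"]) (use x y True in \<open>simp_all add: ivl_simps Cf2_def\<close>)
next
  case False
  then have ypos: "0 < y" by simp
  have xp: "\<forall>j\<in>{1..2::nat}. 0 < x j \<and> x j \<le> 1" using H[OF ypos] x by auto
  have sS: "(\<Sum>j\<in>{1..2::nat}. SS (x j)) = real 2 * SS y" using H[OF ypos] by auto
  have l0: "(15/1024) \<le> y" using False by simp
  show ?thesis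
  proof (cases "y \<le> (33/1024)")
    case True show ?thesis by (rule iv2_0[OF xp l0 True sS])
  next
    case False then have l1: "(33/1024) \<le> y" by simp
  show ?thesis
  proof (cases "y \<le> (65/1024)")
    case True show ?thesis by (rule iv2_1[OF xp l1 True sS])
  next
    case False then have l2: "(65/1024) \<le> y" by simp
  show ?thesis
  proof (cases "y \<le> (113/1024)")
    case True show ?thesis by (rule iv2_2[OF xp l2 True sS])
  next
    case False then have l3: "(113/1024) \<le> y" by simp
  show ?thesis
  proof (cases "y \<le> (11/64)")
    case True show ?thesis by (rule iv2_3[OF xp l3 True sS])
  next
    case False then have l4: "(11/64) \<le> y" by simp
  show ?thesis
  proof (cases "y \<le> (127/512)")
    case True show ?thesis by (rule iv2_4[OF xp l4 True sS])
  next
    case False then have l5: "(127/512) \<le> y" by simp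
  show ?thesis
  proof (cases "y \<le> (347/1024)")
    case True show ?thesis by (rule iv2_5[OF xp l5 True sS])
  next
    case False then have l6: "(347/1024) \<le> y" by simp
  show ?thesis
  proof (cases "y \<le> (227/512)")
    case True show ?thesis by (rule iv2_6[OF xp l6 True sS])
  next
    case False then have l7: "(227/512) \<le> y" by simp
  show ?thesis
  proof (cases "y \<le> (577/1024)")
    case True show ?thesis by (rule iv2_7[OF xp l7 True sS])
  next
    case False then have l8: "(577/1024) \<le> y" by simp
  show ?thesis
  proof (cases "y \<le> (717/1024)")
    case True show ?thesis by (rule iv2_8[OF xp l8 True sS])
  next
    case False then have l9: "(717/1024) \<le> y" by simp
  show ?thesis
  proof (cases "y \<le> (211/256)")
    case True show ?thesis by (rule iv2_9[OF xp l9 True sS])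
  next
    case False then have l10: "(211/256) \<le> y" by simp
  show ?thesis
  proof (cases "y \<le> (457/512)")
    case True show ?thesis by (rule iv2_10[OF xp l10 True sS])
  next
    case False then have l11: "(457/512) \<le> y" by simp
  show ?thesis
  proof (cases "y \<le> (243/256)")
    case True show ?thesis by (rule iv2_11[OF xp l11 True sS])
  next
    case False then have l12: "(243/256) \<le> y" by simp
  show ?thesis by (rule iv2_12[OF xp l12 _ sS]) (use y in simp)
  qed
  qed
  qed
  qed
  qed
  qed
  qed
  qed
  qed
  qed
  qed
  qed
qed

definition Cf3 :: "nat \<Rightarrow> real" where "Cf3 = (\<lambda>j. (if j = 1 then (1) else (if j = 2 then (291641/262144) else (if j = 3 then (1297827/1048576) else 1))))"

lemma Cf3_ge: "\<forall>j\<in>{1..3::nat}. 1 / delta ^ ((j - 1) * (Delta - 1)) \<le> Cf3 j"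
  by (simp add: ivl_simps Cf3_def)

lemma iv3_0:
  assumes "\<forall>j\<in>{1..3::nat}. 0 < x j \<and> x j \<le> 1" "(23/512) \<le> y" "y \<le> (23/256)"
    "(\<Sum>j\<in>{1..3::nat}. SS (x j)) = real 3 * SS y"
  shows "(\<Sum>j\<in>{1..3::nat}. Cf3 j * ph (x j)) \<le> real 3 * K 3 * ph y"
  by (rule interval_ok[where \<xi> = "\<lambda>j. (if j = 1 then (1213/16384) else (if j = 2 then (69/1024) else (if j = 3 then (1005/16384) else 1)))" and \<mu> = "(-(366645/8388608))" and q = "(2208432673/536870912)" and ya = "(23/512)" and yb = "(23/256)"])
    (use assms in \<open>simp_all add: ivl_simps Cf3_def\<close>)

lemma iv3_1:
  assumes "\<forall>j\<in>{1..3::nat}. 0 < x j \<and> x j \<le> 1" "(23/256) \<le> y" "y \<le> (81/512)"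
    "(\<Sum>j\<in>{1..3::nat}. SS (x j)) = real 3 * SS y"
  shows "(\<Sum>j\<in>{1..3::nat}. Cf3 j * ph (x j)) \<le> real 3 * K 3 * ph y"
  by (rule interval_ok[where \<xi> = "\<lambda>j. (if j = 1 then (1111/8192) else (if j = 2 then (2033/16384) else (if j = 3 then (929/8192) else 1)))" and \<mu> = "(-(372709/4194304))" and q = "(4169020673/1073741824)" and ya = "(23/256)" and yb = "(81/512)"])
    (use assms in \<open>simp_all add: ivl_simps Cf3_def\<close>)

lemma iv3_2:
  assumes "\<forall>j\<in>{1..3::nat}. 0 < x j \<and> x j \<le> 1" "(81/512) \<le> y" "y \<le> (129/512)"
    "(\<Sum>j\<in>{1..3::nat}. SS (x j)) = real 3 * SS y"
  shows "(\<Sum>j\<in>{1..3::nat}. Cf3 j * ph (x j)) \<le> real 3 * K 3 * ph y"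
  by (rule interval_ok[where \<xi> = "\<lambda>j. (if j = 1 then (917/4096) else (if j = 2 then (3361/16384) else (if j = 3 then (3079/16384) else 1)))" and \<mu> = "(-(2739727/16777216))" and q = "(3783285585/1073741824)" and ya = "(81/512)" and yb = "(129/512)"])
    (use assms in \<open>simp_all add: ivl_simps Cf3_def\<close>)

lemma iv3_3:
  assumes "\<forall>j\<in>{1..3::nat}. 0 < x j \<and> x j \<le> 1" "(129/512) \<le> y" "y \<le> (191/512)"
    "(\<Sum>j\<in>{1..3::nat}. SS (x j)) = real 3 * SS y"
  shows "(\<Sum>j\<in>{1..3::nat}. Cf3 j * ph (x j)) \<le> real 3 * K 3 * ph y"
  by (rule interval_ok[where \<xi> = "\<lambda>j. (if j = 1 then (701/2048) else (if j = 2 then (5/16) else (if j = 3 then (4681/16384) else 1)))" and \<mu> = "(-(1139091/4194304))" and q = "(3241541819/1073741824)" and ya = "(129/512)" and yb = "(191/512)"])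
    (use assms in \<open>simp_all add: ivl_simps Cf3_def\<close>)

lemma iv3_4:
  assumes "\<forall>j\<in>{1..3::nat}. 0 < x j \<and> x j \<le> 1" "(191/512) \<le> y" "y \<le> (269/512)"
    "(\<Sum>j\<in>{1..3::nat}. SS (x j)) = real 3 * SS y"
  shows "(\<Sum>j\<in>{1..3::nat}. Cf3 j * ph (x j)) \<le> real 3 * K 3 * ph y"
  by (rule interval_ok[where \<xi> = "\<lambda>j. (if j = 1 then (8163/16384) else (if j = 2 then (1839/4096) else (if j = 3 then (6663/16384) else 1)))" and \<mu> = "(-(3427457/8388608))" and q = "(2554499229/1073741824)" and ya = "(191/512)" and yb = "(269/512)"])
    (use assms in \<open>simp_all add: ivl_simps Cf3_def\<close>)

lemma iv3_5:
  assumes "\<forall>j\<in>{1..3::nat}. 0 < x j \<and> x j \<le> 1" "(269/512) \<le> y" "y \<le> (733/1024)"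
    "(\<Sum>j\<in>{1..3::nat}. SS (x j)) = real 3 * SS y"
  shows "(\<Sum>j\<in>{1..3::nat}. Cf3 j * ph (x j)) \<le> real 3 * K 3 * ph y"
  by (rule interval_ok[where \<xi> = "\<lambda>j. (if j = 1 then (11669/16384) else (if j = 2 then (10135/16384) else (if j = 3 then (8975/16384) else 1)))" and \<mu> = "(-(4646643/8388608))" and q = "(1776410441/1073741824)" and ya = "(269/512)" and yb = "(733/1024)"])
    (use assms in \<open>simp_all add: ivl_simps Cf3_def\<close>)

lemma iv3_6:
  assumes "\<forall>j\<in>{1..3::nat}. 0 < x j \<and> x j \<le> 1" "(733/1024) \<le> y" "y \<le> (459/512)"
    "(\<Sum>j\<in>{1..3::nat}. SS (x j)) = real 3 * SS y"
  shows "(\<Sum>j\<in>{1..3::nat}. Cf3 j * ph (x j)) \<le> real 3 * K 3 * ph y"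
  by (rule interval_ok[where \<xi> = "\<lambda>j. (if j = 1 then (1) else (if j = 2 then (6537/8192) else (if j = 3 then (11089/16384) else 1)))" and \<mu> = "(-(5546323/8388608))" and q = "(1095458819/1073741824)" and ya = "(733/1024)" and yb = "(459/512)"])
    (use assms in \<open>simp_all add: ivl_simps Cf3_def\<close>)

lemma iv3_7:
  assumes "\<forall>j\<in>{1..3::nat}. 0 < x j \<and> x j \<le> 1" "(459/512) \<le> y" "y \<le> (1)"
    "(\<Sum>j\<in>{1..3::nat}. SS (x j)) = real 3 * SS y"
  shows "(\<Sum>j\<in>{1..3::nat}. Cf3 j * ph (x j)) \<le> real 3 * K 3 * ph y"
  by (rule interval_ok[where \<xi> = "\<lambda>j. (if j = 1 then (1) else (if j = 2 then (1) else (if j = 3 then (1759/2048) else 1)))" and \<mu> = "(-(6403019/8388608))" and q = "(677606991/1073741824)" and ya = "(459/512)" and yb = "(1)"])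
    (use assms in \<open>simp_all add: ivl_simps Cf3_def\<close>)

lemma main3:
  fixes x :: "nat \<Rightarrow> real"
  assumes x: "\<forall>j\<in>{1..3::nat}. 0 \<le> x j \<and> x j \<le> 1" and y: "0 \<le> y" "y \<le> 1"
    and H: "0 < y \<Longrightarrow> (\<forall>j\<in>{1..3::nat}. 0 < x j) \<and> (\<Sum>j\<in>{1..3::nat}. SS (x j)) = real 3 * SS y"
  shows "(\<Sum>j\<in>{1..3::nat}. Cf3 j * ph (x j)) \<le> real 3 * K 3 * ph y"
proof (cases "y \<le> (23/512)")
  case True
  show ?thesis by (rule triv[where yt="(23/512)"]) (use x y True in \<open>simp_all add: ivl_simps Cf3_def\<close>)
next
  case False
  then have ypos: "0 < y" by simp
  have xp: "\<forall>j\<in>{1..3::nat}. 0 < x j \<and> x j \<le> 1" using H[OF ypos] x by auto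
  have sS: "(\<Sum>j\<in>{1..3::nat}. SS (x j)) = real 3 * SS y" using H[OF ypos] by auto
  have l0: "(23/512) \<le> y" using False by simp
  show ?thesis
  proof (cases "y \<le> (23/256)")
    case True show ?thesis by (rule iv3_0[OF xp l0 True sS])
  next
    case False then have l1: "(23/256) \<le> y" by simp
  show ?thesis
  proof (cases "y \<le> (81/512)")
    case True show ?thesis by (rule iv3_1[OF xp l1 True sS])
  next
    case False then have l2: "(81/512) \<le> y" by simp
  show ?thesis
  proof (cases "y \<le> (129/512)")
    case True show ?thesis by (rule iv3_2[OF xp l2 True sS])
  next
    case False then have l3: "(129/512) \<le> y" by simp
  show ?thesis
  proof (cases "y \<le> (191/512)")
    case True show ?thesis by (rule iv3_3[OF xp l3 True sS])
  next
    case False then have l4: "(191/512) \<le> y" by simp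
  show ?thesis
  proof (cases "y \<le> (269/512)")
    case True show ?thesis by (rule iv3_4[OF xp l4 True sS])
  next
    case False then have l5: "(269/512) \<le> y" by simp
  show ?thesis
  proof (cases "y \<le> (733/1024)")
    case True show ?thesis by (rule iv3_5[OF xp l5 True sS])
  next
    case False then have l6: "(733/1024) \<le> y" by simp
  show ?thesis
  proof (cases "y \<le> (459/512)")
    case True show ?thesis by (rule iv3_6[OF xp l6 True sS])
  next
    case False then have l7: "(459/512) \<le> y" by simp
  show ?thesis by (rule iv3_7[OF xp l7 _ sS]) (use y in simp)
  qed
  qed
  qed
  qed
  qed
  qed
  qed
qed

definition Cf4 :: "nat \<Rightarrow> real" where "Cf4 = (\<lambda>j. (if j = 1 then (1) else (if j = 2 then (291641/262144) else (if j = 3 then (1297827/1048576) else (if j = 4 then (360965/262144) else 1)))))"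

lemma Cf4_ge: "\<forall>j\<in>{1..4::nat}. 1 / delta ^ ((j - 1) * (Delta - 1)) \<le> Cf4 j"
  by (simp add: ivl_simps Cf4_def)

lemma iv4_0:
  assumes "\<forall>j\<in>{1..4::nat}. 0 < x j \<and> x j \<le> 1" "(11/256) \<le> y" "y \<le> (79/1024)"
    "(\<Sum>j\<in>{1..4::nat}. SS (x j)) = real 4 * SS y"
  shows "(\<Sum>j\<in>{1..4::nat}. Cf4 j * ph (x j)) \<le> real 4 * K 4 * ph y"
  by (rule interval_ok[where \<xi> = "\<lambda>j. (if j = 1 then (567/8192) else (if j = 2 then (129/2048) else (if j = 3 then (939/16384) else (if j = 4 then (853/16384) else 1))))" and \<mu> = "(-(679531/16777216))" and q = "(6278026099/1073741824)" and ya = "(11/256)" and yb = "(79/1024)"])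
    (use assms in \<open>simp_all add: ivl_simps Cf4_def\<close>)

lemma iv4_1:
  assumes "\<forall>j\<in>{1..4::nat}. 0 < x j \<and> x j \<le> 1" "(79/1024) \<le> y" "y \<le> (65/512)"
    "(\<Sum>j\<in>{1..4::nat}. SS (x j)) = real 4 * SS y"
  shows "(\<Sum>j\<in>{1..4::nat}. Cf4 j * ph (x j)) \<le> real 4 * K 4 * ph y"
  by (rule interval_ok[where \<xi> = "\<lambda>j. (if j = 1 then (479/4096) else (if j = 2 then (875/8192) else (if j = 3 then (1599/16384) else (if j = 4 then (1459/16384) else 1))))" and \<mu> = "(-(312217/4194304))" and q = "(3011626093/536870912)" and ya = "(79/1024)" and yb = "(65/512)"])
    (use assms in \<open>simp_all add: ivl_simps Cf4_def\<close>)

lemma iv4_2: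
  assumes "\<forall>j\<in>{1..4::nat}. 0 < x j \<and> x j \<le> 1" "(65/512) \<le> y" "y \<le> (199/1024)"
    "(\<Sum>j\<in>{1..4::nat}. SS (x j)) = real 4 * SS y"
  shows "(\<Sum>j\<in>{1..4::nat}. Cf4 j * ph (x j)) \<le> real 4 * K 4 * ph y"
  by (rule interval_ok[where \<xi> = "\<lambda>j. (if j = 1 then (3003/16384) else (if j = 2 then (2751/16384) else (if j = 3 then (315/2048) else (if j = 4 then (2307/16384) else 1))))" and \<mu> = "(-(134193/1048576))" and q = "(2822372037/536870912)" and ya = "(65/512)" and yb = "(199/1024)"])
    (use assms in \<open>simp_all add: ivl_simps Cf4_def\<close>)

lemma iv4_3:
  assumes "\<forall>j\<in>{1..4::nat}. 0 < x j \<and> x j \<le> 1" "(199/1024) \<le> y" "y \<le> (287/1024)"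
    "(\<Sum>j\<in>{1..4::nat}. SS (x j)) = real 4 * SS y"
  shows "(\<Sum>j\<in>{1..4::nat}. Cf4 j * ph (x j)) \<le> real 4 * K 4 * ph y"
  by (rule interval_ok[where \<xi> = "\<lambda>j. (if j = 1 then (2219/8192) else (if j = 2 then (127/512) else (if j = 3 then (3723/16384) else (if j = 4 then (3411/16384) else 1))))" and \<mu> = "(-(3453045/16777216))" and q = "(2558227545/536870912)" and ya = "(199/1024)" and yb = "(287/1024)"])
    (use assms in \<open>simp_all add: ivl_simps Cf4_def\<close>)

lemma iv4_4:
  assumes "\<forall>j\<in>{1..4::nat}. 0 < x j \<and> x j \<le> 1" "(287/1024) \<le> y" "y \<le> (395/1024)"
    "(\<Sum>j\<in>{1..4::nat}. SS (x j)) = real 4 * SS y"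
  shows "(\<Sum>j\<in>{1..4::nat}. Cf4 j * ph (x j)) \<le> real 4 * K 4 * ph y"
  by (rule interval_ok[where \<xi> = "\<lambda>j. (if j = 1 then (49/128) else (if j = 2 then (357/1024) else (if j = 3 then (5213/16384) else (if j = 4 then (4765/16384) else 1))))" and \<mu> = "(-(5178059/16777216))" and q = "(554123643/134217728)" and ya = "(287/1024)" and yb = "(395/1024)"])
    (use assms in \<open>simp_all add: ivl_simps Cf4_def\<close>)

lemma iv4_5:
  assumes "\<forall>j\<in>{1..4::nat}. 0 < x j \<and> x j \<le> 1" "(395/1024) \<le> y" "y \<le> (525/1024)"
    "(\<Sum>j\<in>{1..4::nat}. SS (x j)) = real 4 * SS y"
  shows "(\<Sum>j\<in>{1..4::nat}. Cf4 j * ph (x j)) \<le> real 4 * K 4 * ph y"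
  by (rule interval_ok[where \<xi> = "\<lambda>j. (if j = 1 then (8617/16384) else (if j = 2 then (7739/16384) else (if j = 3 then (6993/16384) else (if j = 4 then (6347/16384) else 1))))" and \<mu> = "(-(7226197/16777216))" and q = "(3614352341/1073741824)" and ya = "(395/1024)" and yb = "(525/1024)"])
    (use assms in \<open>simp_all add: ivl_simps Cf4_def\<close>)

lemma iv4_6:
  assumes "\<forall>j\<in>{1..4::nat}. 0 < x j \<and> x j \<le> 1" "(525/1024) \<le> y" "y \<le> (339/512)"
    "(\<Sum>j\<in>{1..4::nat}. SS (x j)) = real 4 * SS y"
  shows "(\<Sum>j\<in>{1..4::nat}. Cf4 j * ph (x j)) \<le> real 4 * K 4 * ph y"
  by (rule interval_ok[where \<xi> = "\<lambda>j. (if j = 1 then (5881/8192) else (if j = 2 then (5101/8192) else (if j = 3 then (2257/4096) else (if j = 4 then (8081/16384) else 1))))" and \<mu> = "(-(9344069/16777216))" and q = "(679633057/268435456)" and ya = "(525/1024)" and yb = "(339/512)"])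
    (use assms in \<open>simp_all add: ivl_simps Cf4_def\<close>)

lemma iv4_7:
  assumes "\<forall>j\<in>{1..4::nat}. 0 < x j \<and> x j \<le> 1" "(339/512) \<le> y" "y \<le> (805/1024)"
    "(\<Sum>j\<in>{1..4::nat}. SS (x j)) = real 4 * SS y"
  shows "(\<Sum>j\<in>{1..4::nat}. Cf4 j * ph (x j)) \<le> real 4 * K 4 * ph y"
  by (rule interval_ok[where \<xi> = "\<lambda>j. (if j = 1 then (8093/8192) else (if j = 2 then (6313/8192) else (if j = 3 then (5399/8192) else (if j = 4 then (4745/8192) else 1))))" and \<mu> = "(-(10873605/16777216))" and q = "(979083985/536870912)" and ya = "(339/512)" and yb = "(805/1024)"])
    (use assms in \<open>simp_all add: ivl_simps Cf4_def\<close>)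

lemma iv4_8:
  assumes "\<forall>j\<in>{1..4::nat}. 0 < x j \<and> x j \<le> 1" "(805/1024) \<le> y" "y \<le> (885/1024)"
    "(\<Sum>j\<in>{1..4::nat}. SS (x j)) = real 4 * SS y"
  shows "(\<Sum>j\<in>{1..4::nat}. Cf4 j * ph (x j)) \<le> real 4 * K 4 * ph y"
  by (rule interval_ok[where \<xi> = "\<lambda>j. (if j = 1 then (1) else (if j = 2 then (15919/16384) else (if j = 3 then (6267/8192) else (if j = 4 then (10737/16384) else 1))))" and \<mu> = "(-(6022075/8388608))" and q = "(739065439/536870912)" and ya = "(805/1024)" and yb = "(885/1024)"])
    (use assms in \<open>simp_all add: ivl_simps Cf4_def\<close>)

lemma iv4_9:
  assumes "\<forall>j\<in>{1..4::nat}. 0 < x j \<and> x j \<le> 1" "(885/1024) \<le> y" "y \<le> (961/1024)"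
    "(\<Sum>j\<in>{1..4::nat}. SS (x j)) = real 4 * SS y"
  shows "(\<Sum>j\<in>{1..4::nat}. Cf4 j * ph (x j)) \<le> real 4 * K 4 * ph y"
  by (rule interval_ok[where \<xi> = "\<lambda>j. (if j = 1 then (1) else (if j = 2 then (1) else (if j = 3 then (7491/8192) else (if j = 4 then (6073/8192) else 1))))" and \<mu> = "(-(13140379/16777216))" and q = "(1152358953/1073741824)" and ya = "(885/1024)" and yb = "(961/1024)"])
    (use assms in \<open>simp_all add: ivl_simps Cf4_def\<close>)

lemma iv4_10:
  assumes "\<forall>j\<in>{1..4::nat}. 0 < x j \<and> x j \<le> 1" "(961/1024) \<le> y" "y \<le> (1)"
    "(\<Sum>j\<in>{1..4::nat}. SS (x j)) = real 4 * SS y"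
  shows "(\<Sum>j\<in>{1..4::nat}. Cf4 j * ph (x j)) \<le> real 4 * K 4 * ph y"
  by (rule interval_ok[where \<xi> = "\<lambda>j. (if j = 1 then (1) else (if j = 2 then (1) else (if j = 3 then (1) else (if j = 4 then (14535/16384) else 1))))" and \<mu> = "(-(3611953/4194304))" and q = "(881169965/1073741824)" and ya = "(961/1024)" and yb = "(1)"])
    (use assms in \<open>simp_all add: ivl_simps Cf4_def\<close>)

lemma main4:
  fixes x :: "nat \<Rightarrow> real"
  assumes x: "\<forall>j\<in>{1..4::nat}. 0 \<le> x j \<and> x j \<le> 1" and y: "0 \<le> y" "y \<le> 1"
    and H: "0 < y \<Longrightarrow> (\<forall>j\<in>{1..4::nat}. 0 < x j) \<and> (\<Sum>j\<in>{1..4::nat}. SS (x j)) = real 4 * SS y"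
  shows "(\<Sum>j\<in>{1..4::nat}. Cf4 j * ph (x j)) \<le> real 4 * K 4 * ph y"
proof (cases "y \<le> (11/256)")
  case True
  show ?thesis by (rule triv[where yt="(11/256)"]) (use x y True in \<open>simp_all add: ivl_simps Cf4_def\<close>)
next
  case False
  then have ypos: "0 < y" by simp
  have xp: "\<forall>j\<in>{1..4::nat}. 0 < x j \<and> x j \<le> 1" using H[OF ypos] x by auto
  have sS: "(\<Sum>j\<in>{1..4::nat}. SS (x j)) = real 4 * SS y" using H[OF ypos] by auto
  have l0: "(11/256) \<le> y" using False by simp
  show ?thesis
  proof (cases "y \<le> (79/1024)")
    case True show ?thesis by (rule iv4_0[OF xp l0 True sS])
  next
    case False then have l1: "(79/1024) \<le> y" by simp
  show ?thesis
  proof (cases "y \<le> (65/512)")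
    case True show ?thesis by (rule iv4_1[OF xp l1 True sS])
  next
    case False then have l2: "(65/512) \<le> y" by simp
  show ?thesis
  proof (cases "y \<le> (199/1024)")
    case True show ?thesis by (rule iv4_2[OF xp l2 True sS])
  next
    case False then have l3: "(199/1024) \<le> y" by simp
  show ?thesis
  proof (cases "y \<le> (287/1024)")
    case True show ?thesis by (rule iv4_3[OF xp l3 True sS])
  next
    case False then have l4: "(287/1024) \<le> y" by simp
  show ?thesis
  proof (cases "y \<le> (395/1024)")
    case True show ?thesis by (rule iv4_4[OF xp l4 True sS])
  next
    case False then have l5: "(395/1024) \<le> y" by simp
  show ?thesis
  proof (cases "y \<le> (525/1024)")
    case True show ?thesis by (rule iv4_5[OF xp l5 True sS])
  next
    case False then have l6: "(525/1024) \<le> y" by simp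
  show ?thesis
  proof (cases "y \<le> (339/512)")
    case True show ?thesis by (rule iv4_6[OF xp l6 True sS])
  next
    case False then have l7: "(339/512) \<le> y" by simp
  show ?thesis
  proof (cases "y \<le> (805/1024)")
    case True show ?thesis by (rule iv4_7[OF xp l7 True sS])
  next
    case False then have l8: "(805/1024) \<le> y" by simp
  show ?thesis
  proof (cases "y \<le> (885/1024)")
    case True show ?thesis by (rule iv4_8[OF xp l8 True sS])
  next
    case False then have l9: "(885/1024) \<le> y" by simp
  show ?thesis
  proof (cases "y \<le> (961/1024)")
    case True show ?thesis by (rule iv4_9[OF xp l9 True sS])
  next
    case False then have l10: "(961/1024) \<le> y" by simp
  show ?thesis by (rule iv4_10[OF xp l10 _ sS]) (use y in simp)
  qed
  qed
  qed
  qed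
  qed
  qed
  qed
  qed
  qed
  qed
qed

definition XX :: "real \<Rightarrow> real" where "XX t = sqrt (t/(1-t))"

lemma XX_facts:
  assumes t: "0 \<le> t" "t \<le> 1/2"
  shows "0 \<le> XX t" "XX t \<le> 1" "h t = ph (XX t)"
proof -
  have t1: "1 - t > 0" using t by simp
  have q: "0 \<le> t/(1-t)" using t t1 by simp
  have q1: "t/(1-t) \<le> 1" using t t1 by (simp add: divide_simps)
  show "0 \<le> XX t" unfolding XX_def using q by simp
  show "XX t \<le> 1" unfolding XX_def using q1 by simp
  have sq: "(XX t)^2 = t/(1-t)" unfolding XX_def using q by simp
  have "1 + (XX t)^2 = 1/(1-t)" unfolding sq using t1 by (simp add: field_simps)
  then have "ph (XX t) = (13/10 - XX t) * (1-t)" unfolding ph_def by simp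
  moreover have "h t = (1-t) * (13/10 - XX t)"
    unfolding h_def psi_def chi_def XX_def using q by (simp add: powr_half_sqrt)
  ultimately show "h t = ph (XX t)" by simp
qed

lemma XX_pos: "0 < t \<Longrightarrow> t \<le> 1/2 \<Longrightarrow> 0 < XX t"
  unfolding XX_def by simp

lemma XX_SS: assumes "0 < t" "t \<le> 1/2" shows "SS (XX t) = ln t"
proof -
  have t1: "1 - t > 0" using assms by simp
  have q: "0 \<le> t/(1-t)" using assms t1 by simp
  have sq: "(XX t)^2 = t/(1-t)" unfolding XX_def using q by simp
  have "tt (XX t) = t" unfolding tt_def sq using t1 by (simp add: field_simps)
  then show ?thesis unfolding SS_def by simp
qed

lemma XX_zero: "XX 0 = 0" unfolding XX_def by simp

lemma jensen:
  fixes x :: "nat \<Rightarrow> real" and I :: "nat set"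
  assumes fin: "finite I" and x: "\<forall>j\<in>I. 0 \<le> x j \<and> x j \<le> 1" and y: "0 \<le> y" "y \<le> 1"
    and H: "0 < y \<Longrightarrow> (\<forall>j\<in>I. 0 < x j) \<and> (\<Sum>j\<in>I. SS (x j)) = real (card I) * SS y"
  shows "(\<Sum>j\<in>I. ph (x j)) \<le> real (card I) * ph y"
proof (cases "y = 0")
  case True
  have "(\<Sum>j\<in>I. ph (x j)) \<le> (\<Sum>j\<in>I. 13/10)" using x ph_le by (intro sum_mono) auto
  then show ?thesis using True by (simp add: ph_def)
next
  case False
  then have yp: "0 < y" using y by simp
  have "(\<Sum>j\<in>I. ph (x j)) \<le> (\<Sum>j\<in>I. ph y + DD y * (SS (x j) - SS y))"
    using H[OF yp] x y yp by (intro sum_mono tangent) auto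
  also have "\<dots> = real (card I) * ph y + DD y * ((\<Sum>j\<in>I. SS (x j)) - real (card I) * SS y)"
    by (simp add: sum.distrib sum_distrib_left sum_subtractf algebra_simps)
  also have "\<dots> = real (card I) * ph y" using H[OF yp] by simp
  finally show ?thesis .
qed

lemma cf_nonneg: "0 \<le> 1 / delta ^ n" unfolding delta_def by simp

theorem lemma36:
  fixes w :: nat and t :: "nat \<Rightarrow> real"
  assumes "w \<ge> 1"
    and "\<And>j. j \<in> {1..w} \<Longrightarrow> 0 \<le> t j \<and> t j \<le> 1/2"
  shows "(\<Sum>j=1..w. (1 / delta ^ ((j - 1) * (Delta - 1))) * h (t j))
           \<le> real w * K w * h (root w (\<Prod>j=1..w. t j))"
proof -
  define G where "G = root w (\<Prod>j=1..w. t j)"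
  define x where "x = (\<lambda>j. XX (t j))"
  define y where "y = XX G"
  have w0: "w > 0" using assms(1) by simp
  have tj: "\<forall>j\<in>{1..w}. 0 \<le> t j \<and> t j \<le> 1/2" using assms(2) by blast
  have P0: "0 \<le> (\<Prod>j=1..w. t j)" using tj by (intro prod_nonneg) auto
  have "(\<Prod>j=1..w. t j) \<le> (\<Prod>j=1..w. (1/2::real))" using tj by (intro prod_mono) auto
  then have P1: "(\<Prod>j=1..w. t j) \<le> (1/2)^w" by simp
  have G0: "0 \<le> G" unfolding G_def using P0 by (simp add: real_root_ge_zero)
  have "G \<le> root w ((1/2)^w)" unfolding G_def using P1 w0 by simp
  then have G1: "G \<le> 1/2" using w0 by (simp add: real_root_power_cancel)
  have hx: "\<forall>j\<in>{1..w}. h (t j) = ph (x j)" using tj XX_facts unfolding x_def by auto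
  have hy: "h G = ph y" using XX_facts[OF G0 G1] unfolding y_def by simp
  have xr: "\<forall>j\<in>{1..w}. 0 \<le> x j \<and> x j \<le> 1" using tj XX_facts unfolding x_def by auto
  have y01: "0 \<le> y" "y \<le> 1" using XX_facts[OF G0 G1] unfolding y_def by auto
  have H: "(\<forall>j\<in>{1..w}. 0 < x j) \<and> (\<Sum>j\<in>{1..w}. SS (x j)) = real w * SS y" if yp: "0 < y"
  proof -
    have "G \<noteq> 0" using yp XX_zero unfolding y_def by auto
    then have Gp: "0 < G" using G0 by simp
    have "(\<Prod>j=1..w. t j) \<noteq> 0"
    proof
      assume "(\<Prod>j=1..w. t j) = 0"
      then have "G = 0" unfolding G_def by (simp only: real_root_zero)
      then show False using Gp by simp
    qed
    then have tp: "\<forall>j\<in>{1..w}. 0 < t j"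
    proof (intro ballI)
      fix j assume j: "j \<in> {1..w}" and nz: "(\<Prod>j=1..w. t j) \<noteq> 0"
      have "t j \<noteq> 0"
      proof
        assume "t j = 0"
        then have "(\<Prod>j=1..w. t j) = 0" using j by (intro prod_zero) auto
        then show False using nz by simp
      qed
      then show "0 < t j" using tj j by force
    qed
    have "(\<Sum>j\<in>{1..w}. SS (x j)) = (\<Sum>j\<in>{1..w}. ln (t j))"
      using tp tj XX_SS unfolding x_def by (intro sum.cong) auto
    also have "\<dots> = ln (\<Prod>j=1..w. t j)" proof (rule ln_prod[symmetric])
      fix i assume "i \<in> {1..w}" then show "t i \<noteq> 0" using tp by (metis less_irrefl)
    qed simp
    also have "(\<Prod>j=1..w. t j) = G ^ w" unfolding G_def using P0 w0 by simp
    also have "ln (G ^ w) = real w * ln G" using Gp by (simp add: ln_realpow)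
    also have "ln G = SS y" unfolding y_def using XX_SS Gp G1 by simp
    finally show ?thesis using tp XX_pos tj unfolding x_def by auto
  qed
  have key: "(\<Sum>j=1..w. (1 / delta ^ ((j - 1) * (Delta - 1))) * ph (x j)) \<le> real w * K w * ph y"
  proof -
    consider "w = 1" | "w = 2" | "w = 3" | "w = 4" | "w \<ge> 5" using w0 by linarith
    then show ?thesis
    proof cases
      case 1
      then have "y = x 1" unfolding y_def x_def G_def by simp
      then show ?thesis using 1 by (simp add: K_def)
    next
      case 2
      have "(\<Sum>j=1..w. (1 / delta ^ ((j - 1) * (Delta - 1))) * ph (x j)) \<le> (\<Sum>j=1..w. Cf2 j * ph (x j))"
        using Cf2_ge xr ph_nonneg 2 by (intro sum_mono mult_right_mono) auto
      also have "\<dots> \<le> real w * K w * ph y" using main2[of x y] xr y01 H 2 by simp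
      finally show ?thesis .
    next
      case 3
      have "(\<Sum>j=1..w. (1 / delta ^ ((j - 1) * (Delta - 1))) * ph (x j)) \<le> (\<Sum>j=1..w. Cf3 j * ph (x j))"
        using Cf3_ge xr ph_nonneg 3 by (intro sum_mono mult_right_mono) auto
      also have "\<dots> \<le> real w * K w * ph y" using main3[of x y] xr y01 H 3 by simp
      finally show ?thesis .
    next
      case 4
      have "(\<Sum>j=1..w. (1 / delta ^ ((j - 1) * (Delta - 1))) * ph (x j)) \<le> (\<Sum>j=1..w. Cf4 j * ph (x j))"
        using Cf4_ge xr ph_nonneg 4 by (intro sum_mono mult_right_mono) auto
      also have "\<dots> \<le> real w * K w * ph y" using main4[of x y] xr y01 H 4 by simp
      finally show ?thesis .
    next
      case 5
      have Kw: "K w = (1/delta) ^ ((w - 1) * (Delta - 1))" using 5 unfolding K_def by simp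
      have d1: "1 \<le> 1/delta" unfolding delta_def by simp
      have cle: "1 / delta ^ ((j - 1) * (Delta - 1)) \<le> K w" if "j \<in> {1..w}" for j
      proof -
        have "(j - 1) * (Delta - 1) \<le> (w - 1) * (Delta - 1)" using that by (intro mult_right_mono) auto
        then have "(1/delta) ^ ((j - 1) * (Delta - 1)) \<le> (1/delta) ^ ((w - 1) * (Delta - 1))"
          using d1 by (intro power_increasing) auto
        then show ?thesis unfolding Kw by (simp add: power_one_over)
      qed
      have "(\<Sum>j=1..w. (1 / delta ^ ((j - 1) * (Delta - 1))) * ph (x j)) \<le> (\<Sum>j=1..w. K w * ph (x j))"
        using cle xr ph_nonneg by (intro sum_mono mult_right_mono) auto
      also have "\<dots> = K w * (\<Sum>j=1..w. ph (x j))" by (simp add: sum_distrib_left)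
      also have "\<dots> \<le> K w * (real w * ph y)"
      proof (intro mult_left_mono)
        show "(\<Sum>j=1..w. ph (x j)) \<le> real w * ph y"
          using jensen[of "{1..w}" x y] xr y01 H by simp
        show "0 \<le> K w" unfolding Kw delta_def by simp
      qed
      finally show ?thesis by (simp add: algebra_simps)
    qed
  qed
  have "(\<Sum>j=1..w. (1 / delta ^ ((j - 1) * (Delta - 1))) * h (t j)) = (\<Sum>j=1..w. (1 / delta ^ ((j - 1) * (Delta - 1))) * ph (x j))"
    using hx by (intro sum.cong) auto
  also have "\<dots> \<le> real w * K w * ph y" by (rule key)
  also have "\<dots> = real w * K w * h (root w (\<Prod>j=1..w. t j))" using hy unfolding G_def by simp
  finally show ?thesis .
qed

end
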